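(* Let $C\subsetneq S^n\subset\mathbb{R}^{n+1}$ be a closed convex subset of the round unit sphere with non-empty interior. Then there is a unique point $x_0\in C$ such that $d(x_0,\partial C)=\sup_{x\in C}d(x,\partial C)$. Moreover, $\sup_{y\in C}d(y,x_0)\le\frac{\pi}{2}$.
   Context: $d$ denotes the spherical (angular) metric on $S^n$; $C$ is convex if it contains the minimal geodesic segment between any two of its points at distance $<\pi$; $\partial C$ is the topological boundary of $C$ in $S^n$. *)

theory Defs
  imports "HOL-Analysis.Analysis"
begin

text \<open>The round unit sphere S^n inside a Euclidean space 'a of dimension n+1 is
  sphere 0 1; it carries the subspace topology.\<close>

abbreviation sph_top :: "'a::euclidean_space topology" where
  "sph_top \<equiv> subtopology euclidean (sphere (0::'a) 1)"

definition sph_dist :: "'a::euclidean_space \<Rightarrow> 'a \<Rightarrow> real" where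
  "sph_dist x y = arccos (x \<bullet> y)"

text \<open>Minimal geodesic segment from x to y on the unit sphere (for sph_dist x y < pi):
  the great-circle arc t \<mapsto> cos t x + sin t u, t in [0, d(x,y)],
  where u is the unit tangent vector at x pointing towards y.\<close>
definition sph_segment :: "'a::euclidean_space \<Rightarrow> 'a \<Rightarrow> 'a set" where
  "sph_segment x y =
     (let \<theta> = sph_dist x y; u = (y - cos \<theta> *\<^sub>R x) /\<^sub>R sin \<theta>
      in {cos t *\<^sub>R x + sin t *\<^sub>R u | t. t \<in> {0..\<theta>}})"

definition sph_convex :: "'a::euclidean_space set \<Rightarrow> bool" where
  "sph_convex C \<longleftrightarrow> C \<subseteq> sphere 0 1 \<and>
     (\<forall>x\<in>C. \<forall>y\<in>C. sph_dist x y < pi \<longrightarrow> sph_segment x y \<subseteq> C)"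

definition sph_setdist :: "'a::euclidean_space \<Rightarrow> 'a set \<Rightarrow> real" where
  "sph_setdist x A = Inf (sph_dist x ` A)"

end

theory Submission
  imports Defs
begin

lemma unit_inner_dist:
  fixes x w :: "'a::euclidean_space"
  assumes "norm x = 1" "norm w = 1"
  shows "(norm (w - x))\<^sup>2 = 2 - 2 * (w \<bullet> x)"
proof -
  have "(norm (w - x))\<^sup>2 = (w - x) \<bullet> (w - x)" by (simp add: power2_norm_eq_inner)
  also have "\<dots> = w \<bullet> w - 2 * (w \<bullet> x) + x \<bullet> x" by (simp add: inner_diff inner_commute)
  also have "\<dots> = 2 - 2 * (w \<bullet> x)" using assms by (simp add: dot_square_norm)
  finally show ?thesis .
qed

lemma unit_inner_le1:
  fixes x w :: "'a::euclidean_space"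
  assumes "norm x = 1" "norm w = 1"
  shows "\<bar>w \<bullet> x\<bar> \<le> 1"
  using Cauchy_Schwarz_ineq2[of w x] assms by simp

lemma unit_inner_eq1:
  fixes x w :: "'a::euclidean_space"
  assumes "norm x = 1" "norm w = 1" "w \<bullet> x = 1"
  shows "w = x"
proof -
  have "(norm (w - x))\<^sup>2 = 0" using unit_inner_dist[OF assms(1,2)] assms(3) by simp
  thus ?thesis by simp
qed

lemma unit_inner_eqm1:
  fixes x w :: "'a::euclidean_space"
  assumes "norm x = 1" "norm w = 1" "w \<bullet> x = -1"
  shows "w = -x"
proof -
  have "norm (-x) = 1" using assms by simp
  moreover have "w \<bullet> (-x) = 1" using assms by simp
  ultimately show ?thesis using unit_inner_eq1[OF _ assms(2)] by blast
qed


lemma arc_basic: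
  fixes x y :: "'a::euclidean_space"
  assumes x: "norm x = 1" and y: "norm y = 1" and xy: "x \<noteq> y" "x \<noteq> -y"
  defines "c \<equiv> x \<bullet> y"
  defines "s \<equiv> sqrt (1 - c\<^sup>2)"
  defines "u \<equiv> (y - c *\<^sub>R x) /\<^sub>R s"
  shows "-1 < c" "c < 1" "0 < s" "s = sin (arccos c)" "cos (arccos c) = c"
    "x \<bullet> u = 0" "norm u = 1" "y = c *\<^sub>R x + s *\<^sub>R u"
    "sph_segment x y = {cos t *\<^sub>R x + sin t *\<^sub>R u | t. t \<in> {0..arccos c}}"
proof -
  have cb: "\<bar>c\<bar> \<le> 1" using unit_inner_le1[OF y x] unfolding c_def by (simp add: inner_commute)
  have "c \<noteq> 1" using unit_inner_eq1[OF y x] xy unfolding c_def by (metis inner_commute)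
  moreover have "c \<noteq> -1" using unit_inner_eqm1[OF x y] xy unfolding c_def by (metis inner_commute minus_minus)
  ultimately show c1: "-1 < c" "c < 1" using cb by auto
  have "c\<^sup>2 < 1" using c1 by (simp add: abs_less_iff power2_less_1_iff[symmetric] abs_square_less_1)
  then show s0: "0 < s" unfolding s_def by simp
  show ss: "s = sin (arccos c)" unfolding s_def using cb by (simp add: sin_arccos)
  show cc: "cos (arccos c) = c" using cb by simp
  show xu: "x \<bullet> u = 0" unfolding u_def c_def using x
    by (simp add: inner_diff_right dot_square_norm)
  have "(norm (y - c *\<^sub>R x))\<^sup>2 = (y - c *\<^sub>R x) \<bullet> (y - c *\<^sub>R x)" by (simp add: power2_norm_eq_inner)
  also have "\<dots> = y \<bullet> y - 2 * c * (x \<bullet> y) + c\<^sup>2 * (x \<bullet> x)"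
    by (simp add: inner_diff inner_commute power2_eq_square algebra_simps)
  also have "\<dots> = 1 - c\<^sup>2" using x y unfolding c_def by (simp add: dot_square_norm power2_eq_square)
  finally have "norm (y - c *\<^sub>R x) = s" unfolding s_def by (simp add: real_sqrt_unique)
  then show "norm u = 1" unfolding u_def using s0 by simp
  show "y = c *\<^sub>R x + s *\<^sub>R u" unfolding u_def using s0 by simp
  show "sph_segment x y = {cos t *\<^sub>R x + sin t *\<^sub>R u | t. t \<in> {0..arccos c}}"
    unfolding sph_segment_def sph_dist_def Let_def u_def c_def[symmetric] cc ss[symmetric] by simp
qed

lemma arc_point:
  fixes x u :: "'a::euclidean_space"
  assumes "norm x = 1" "norm u = 1" "x \<bullet> u = 0"
  shows "norm (cos t *\<^sub>R x + sin t *\<^sub>R u) = 1" "(cos t *\<^sub>R x + sin t *\<^sub>R u) \<bullet> x = cos t"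
proof -
  have "(norm (cos t *\<^sub>R x + sin t *\<^sub>R u))\<^sup>2 = (cos t *\<^sub>R x + sin t *\<^sub>R u) \<bullet> (cos t *\<^sub>R x + sin t *\<^sub>R u)"
    by (rule power2_norm_eq_inner)
  also have "\<dots> = (cos t)\<^sup>2 * (x \<bullet> x) + 2 * cos t * sin t * (x \<bullet> u) + (sin t)\<^sup>2 * (u \<bullet> u)"
    by (simp add: inner_add inner_commute power2_eq_square algebra_simps)
  also have "\<dots> = 1" using assms by (simp add: dot_square_norm)
  finally show "norm (cos t *\<^sub>R x + sin t *\<^sub>R u) = 1"
    by (metis norm_ge_zero real_sqrt_one real_sqrt_unique)
  show "(cos t *\<^sub>R x + sin t *\<^sub>R u) \<bullet> x = cos t" using assms
    by (simp add: inner_add_left dot_square_norm inner_commute[of u x])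
qed


lemma scalar_key:
  fixes a b c s :: real
  assumes "a > 0" "b > 0" "s > 0" "c\<^sup>2 + s\<^sup>2 = 1"
  shows "c * sqrt ((a + b * c)\<^sup>2 + (b * s)\<^sup>2) \<le> a + b * c"
proof -
  define A where "A = a + b * c"
  define N where "N = sqrt (A\<^sup>2 + (b * s)\<^sup>2)"
  have N0: "N \<ge> 0" unfolding N_def by simp
  have NN: "N\<^sup>2 = A\<^sup>2 + (b * s)\<^sup>2" unfolding N_def by simp
  have c2: "c\<^sup>2 = 1 - s\<^sup>2" using assms(4) by simp
  have key: "A\<^sup>2 - (c * N)\<^sup>2 = s\<^sup>2 * (A\<^sup>2 - (c * b)\<^sup>2)"
    unfolding power_mult_distrib NN c2 by (simp add: algebra_simps power2_eq_square)
  have "c * N \<le> A"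
  proof (cases "c > 0")
    case True
    hence A0: "A > 0" unfolding A_def using assms by (simp add: add_pos_pos)
    have "c * b \<le> A" unfolding A_def using assms True by simp
    hence "(c * b)\<^sup>2 \<le> A\<^sup>2" using True assms by (intro power_mono) auto
    hence "0 \<le> s\<^sup>2 * (A\<^sup>2 - (c * b)\<^sup>2)" by simp
    hence "(c * N)\<^sup>2 \<le> A\<^sup>2" using key by linarith
    thus ?thesis by (rule power2_le_imp_le) (use A0 in auto)
  next
    case False
    show ?thesis
    proof (cases "A \<ge> 0")
      case True
      have "c * N \<le> 0" using False N0 by (intro mult_nonpos_nonneg) auto
      thus ?thesis using True by linarith
    next
      case F2: False
      have "-A \<le> -c * b" unfolding A_def using assms by simp
      moreover have "0 \<le> -A" using F2 by simp
      ultimately have "(-A)\<^sup>2 \<le> (-c*b)\<^sup>2" by (intro power_mono) auto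
      hence "A\<^sup>2 \<le> (c * b)\<^sup>2" by simp
      hence "s\<^sup>2 * (A\<^sup>2 - (c * b)\<^sup>2) \<le> 0" by (simp add: mult_nonneg_nonpos)
      hence "A\<^sup>2 \<le> (c * N)\<^sup>2" using key by linarith
      hence "(-A)\<^sup>2 \<le> (-(c * N))\<^sup>2" by simp
      moreover have "0 \<le> -(c*N)" using False N0 by (simp add: mult_nonpos_nonneg)
      ultimately have "-A \<le> -(c*N)" by (rule power2_le_imp_le)
      thus ?thesis by simp
    qed
  qed
  thus ?thesis unfolding A_def N_def .
qed

lemma comb_in_segment:
  fixes x y :: "'a::euclidean_space"
  assumes x: "norm x = 1" and y: "norm y = 1" and xy: "x \<noteq> y" "x \<noteq> -y"
    and ab: "\<alpha> > 0" "\<beta> > 0"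
  shows "(\<alpha> *\<^sub>R x + \<beta> *\<^sub>R y) /\<^sub>R norm (\<alpha> *\<^sub>R x + \<beta> *\<^sub>R y) \<in> sph_segment x y"
proof -
  define c where "c = x \<bullet> y"
  define s where "s = sqrt (1 - c\<^sup>2)"
  define u where "u = (y - c *\<^sub>R x) /\<^sub>R s"
  note B = arc_basic[OF x y xy, folded c_def, folded s_def, folded u_def]
  define A where "A = \<alpha> + \<beta> * c"
  define Bb where "Bb = \<beta> * s"
  have v: "\<alpha> *\<^sub>R x + \<beta> *\<^sub>R y = A *\<^sub>R x + Bb *\<^sub>R u"
    by (subst B(8)) (simp add: A_def Bb_def algebra_simps)
  have ux: "u \<bullet> x = 0" using B(6) by (simp add: inner_commute)
  have "(norm (A *\<^sub>R x + Bb *\<^sub>R u))\<^sup>2 = (A *\<^sub>R x + Bb *\<^sub>R u) \<bullet> (A *\<^sub>R x + Bb *\<^sub>R u)"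
    by (rule power2_norm_eq_inner)
  also have "\<dots> = A\<^sup>2 * (x \<bullet> x) + 2 * A * Bb * (x \<bullet> u) + Bb\<^sup>2 * (u \<bullet> u)"
    by (simp add: inner_add inner_commute power2_eq_square algebra_simps)
  also have "\<dots> = A\<^sup>2 + Bb\<^sup>2" using x B(6,7) by (simp add: dot_square_norm)
  finally have Nsq: "(norm (A *\<^sub>R x + Bb *\<^sub>R u))\<^sup>2 = A\<^sup>2 + Bb\<^sup>2" .
  define N where "N = sqrt (A\<^sup>2 + Bb\<^sup>2)"
  have NN: "norm (A *\<^sub>R x + Bb *\<^sub>R u) = N" unfolding N_def using Nsq
    by (metis norm_ge_zero real_sqrt_unique)
  have Bb0: "Bb > 0" unfolding Bb_def using ab B(3) by simp
  have N0: "N > 0" unfolding N_def using Bb0 by (simp add: add_nonneg_pos)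
  define X where "X = A / N"
  define Y where "Y = Bb / N"
  have XY: "X\<^sup>2 + Y\<^sup>2 = 1" unfolding X_def Y_def N_def using N0 Bb0 unfolding N_def
    by (simp add: power_divide add_divide_distrib[symmetric] add_nonneg_nonneg)
  have Y0: "Y > 0" unfolding Y_def using Bb0 N0 by simp
  have "X\<^sup>2 \<le> 1" using XY zero_le_power2[of Y] by linarith
  hence Xb: "\<bar>X\<bar> \<le> 1" by (simp add: abs_square_le_1)
  define t where "t = arccos X"
  have ct: "cos t = X" unfolding t_def using Xb by simp
  have st: "sin t = Y" unfolding t_def using Xb XY Y0
    by (simp add: sin_arccos) (metis abs_of_pos add.commute add_diff_cancel_right' real_sqrt_abs)
  have cs: "c\<^sup>2 + s\<^sup>2 = 1" unfolding s_def using B(1,2)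
    by (simp add: abs_square_le_1 less_imp_le)
  have "c * N \<le> A" unfolding N_def A_def Bb_def using scalar_key[OF ab B(3) cs] by simp
  hence cX: "c \<le> X" unfolding X_def using N0 by (simp add: pos_le_divide_eq)
  have t0: "0 \<le> t" unfolding t_def using Xb by (intro arccos_lbound) auto
  have tl: "t \<le> arccos c" unfolding t_def using cX Xb B(1) by (intro arccos_le_arccos) auto
  have "(\<alpha> *\<^sub>R x + \<beta> *\<^sub>R y) /\<^sub>R norm (\<alpha> *\<^sub>R x + \<beta> *\<^sub>R y) = cos t *\<^sub>R x + sin t *\<^sub>R u"
    unfolding v NN ct st X_def Y_def by (simp add: scaleR_add_right divide_inverse_commute)
  thus ?thesis unfolding B(9) using t0 tl by (intro CollectI exI[where x=t]) auto
qed


definition Kc :: "'a::euclidean_space set \<Rightarrow> 'a set" where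
  "Kc C = {v. v = 0 \<or> v /\<^sub>R norm v \<in> C}"

definition good :: "'a::euclidean_space set \<Rightarrow> 'a \<Rightarrow> real \<Rightarrow> bool" where
  "good C x e \<longleftrightarrow> (\<forall>w\<in>sphere 0 1. w \<bullet> x > sqrt (1 - e\<^sup>2) \<longrightarrow> w \<in> C)"

context
  fixes C :: "'a::euclidean_space set"
  assumes dim: "DIM('a) \<ge> 2" and CS: "C \<subseteq> sphere 0 1" and CneS: "C \<noteq> sphere 0 1"
    and Ccl: "closedin sph_top C" and Ccv: "sph_convex C"
    and Cint: "sph_top interior_of C \<noteq> {}"
begin

abbreviation "F \<equiv> sph_top frontier_of C"

lemma C_ne: "C \<noteq> {}"
  using Cint interior_of_subset[of sph_top C] by blast

lemma F_sub: "F \<subseteq> C" using Ccl by (rule frontier_of_subset_closedin)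

lemma F_sph: "F \<subseteq> sphere 0 1" using F_sub CS by blast

lemma F_closed: "closed F"
  by (rule closedin_closed_trans[OF closedin_frontier_of]) simp

lemma C_closed: "closed C"
  by (rule closedin_closed_trans[OF Ccl]) simp

lemma C_compact: "compact C"
  using C_closed CS by (meson bounded_sphere bounded_subset compact_eq_bounded_closed)

lemma F_ne: "F \<noteq> {}"
proof
  assume "F = {}"
  hence oc: "closedin sph_top C \<and> openin sph_top C"
    using frontier_of_eq_empty[of C sph_top] CS by simp
  have "connected_space (sph_top :: 'a topology)"
    using connected_sphere[OF dim] by (simp add: connected_space_subtopology)
  hence "C = {} \<or> C = topspace sph_top" using oc unfolding connected_space_clopen_in by blast
  thus False using C_ne CneS by simp
qed

lemma F_int: "z \<in> F \<Longrightarrow> z \<notin> sph_top interior_of C"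
  unfolding frontier_of_def by blast

lemma delta_le2:
  assumes "norm x = 1"
  shows "infdist x F \<le> 2"
proof -
  obtain z where z: "z \<in> F" using F_ne by blast
  have "infdist x F \<le> dist x z" by (rule infdist_le[OF z])
  also have "\<dots> \<le> norm x + norm z" by (simp add: dist_norm norm_triangle_ineq4)
  also have "\<dots> = 2" using assms z F_sph by auto
  finally show ?thesis .
qed

lemma Q1:
  assumes x: "x \<in> C" and w: "w \<in> sphere 0 1" and d: "norm (w - x) < infdist x F"
  shows "w \<in> C"
proof (rule ccontr)
  assume wC: "w \<notin> C"
  have xn: "norm x = 1" using x CS by auto
  have wn: "norm w = 1" using w by simp
  have "w \<noteq> x" using wC x by blast
  moreover have "w \<noteq> -x"
  proof
    assume "w = -x"
    hence "w - x = (-2) *\<^sub>R x" by (simp add: algebra_simps scaleR_2)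
    hence "norm (w - x) = 2" using xn by simp
    thus False using d delta_le2[OF xn] by simp
  qed
  ultimately have xw: "x \<noteq> w" "x \<noteq> -w" by auto
  define c where "c = x \<bullet> w"
  define s where "s = sqrt (1 - c\<^sup>2)"
  define u where "u = (w - c *\<^sub>R x) /\<^sub>R s"
  note B = arc_basic[OF xn wn xw, folded c_def, folded s_def, folded u_def]
  define g where "g = (\<lambda>t. cos t *\<^sub>R x + sin t *\<^sub>R u)"
  define T where "T = g ` {0..arccos c}"
  have seg: "sph_segment x w = T" unfolding T_def g_def B(9) by auto
  have "continuous_on {0..arccos c} g" unfolding g_def by (intro continuous_intros)
  hence Tc: "connected T" unfolding T_def by (intro connected_continuous_image) auto
  have Ts: "T \<subseteq> sphere 0 1" unfolding T_def g_def using arc_point(1)[OF xn B(7) B(6)] by auto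
  have ac: "0 \<le> arccos c" "arccos c \<le> pi" using B(1,2) by (auto intro: arccos_lbound arccos_ubound)
  have xT: "x \<in> T" unfolding T_def g_def using ac by (force intro!: image_eqI[where x=0])
  have wT: "w \<in> T" unfolding T_def g_def using ac B(4,5,8)
    by (intro image_eqI[where x="arccos c"]) auto
  have "connectedin sph_top T" using Tc Ts by (simp add: connectedin_subtopology)
  moreover have "T \<inter> C \<noteq> {}" using xT x by blast
  moreover have "T - C \<noteq> {}" using wT wC by blast
  ultimately have "T \<inter> F \<noteq> {}" by (rule connectedin_Int_frontier_of)
  then obtain t where t: "t \<in> {0..arccos c}" "g t \<in> F" unfolding T_def by blast
  have "cos (arccos c) \<le> cos t" using t ac by (intro cos_monotone_0_pi_le) auto
  hence "c \<le> g t \<bullet> x" unfolding g_def using arc_point(2)[OF xn B(7) B(6)] B(5) by simp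
  moreover have "norm (g t) = 1" unfolding g_def using arc_point(1)[OF xn B(7) B(6)] .
  ultimately have "(norm (g t - x))\<^sup>2 \<le> (norm (w - x))\<^sup>2"
    using unit_inner_dist[OF xn] wn unfolding c_def by (simp add: inner_commute)
  hence "norm (g t - x) \<le> norm (w - x)" by (simp add: power2_le_iff_abs_le)
  moreover have "infdist x F \<le> dist x (g t)" by (rule infdist_le[OF t(2)])
  ultimately show False using d by (simp add: dist_norm norm_minus_commute)
qed

lemma Q2:
  assumes x: "norm x = 1" and h: "\<And>w. w \<in> sphere 0 1 \<Longrightarrow> norm (w - x) < s \<Longrightarrow> w \<in> C"
  shows "s \<le> infdist x F"
proof (rule ccontr)
  assume "\<not> s \<le> infdist x F"
  obtain z where z: "z \<in> F" "infdist x F = dist x z"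
    using infdist_attains_inf[OF F_closed F_ne] by metis
  have zs: "dist x z < s" using z \<open>\<not> s \<le> infdist x F\<close> by simp
  define T where "T = sphere 0 1 \<inter> ball x s"
  have "openin sph_top T" unfolding T_def by (intro openin_subtopology_Int2) auto
  moreover have "T \<subseteq> C" unfolding T_def using h by (auto simp: dist_norm norm_minus_commute)
  ultimately have "T \<subseteq> sph_top interior_of C" by (intro interior_of_maximal)
  moreover have "z \<in> T" unfolding T_def using zs z(1) F_sph by auto
  ultimately show False using F_int[OF z(1)] by blast
qed


lemma K_iff: "v \<noteq> 0 \<Longrightarrow> v \<in> Kc C \<longleftrightarrow> v /\<^sub>R norm v \<in> C"
  unfolding Kc_def by auto

lemma K_0: "0 \<in> Kc C" unfolding Kc_def by auto

lemma C_K: "x \<in> C \<Longrightarrow> x \<in> Kc C"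
  using CS unfolding Kc_def by auto

lemma K_scale:
  assumes "v \<in> Kc C" "a \<ge> 0"
  shows "a *\<^sub>R v \<in> Kc C"
proof (cases "a = 0 \<or> v = 0")
  case True thus ?thesis using K_0 by auto
next
  case False
  hence "a > 0" "v \<noteq> 0" using assms by auto
  hence eq: "(a *\<^sub>R v) /\<^sub>R norm (a *\<^sub>R v) = v /\<^sub>R norm v" by simp
  have "v /\<^sub>R norm v \<in> C" using assms(1) \<open>v \<noteq> 0\<close> unfolding Kc_def by blast
  hence "(a *\<^sub>R v) /\<^sub>R norm (a *\<^sub>R v) \<in> C" by (simp only: eq)
  thus ?thesis unfolding Kc_def by blast
qed

lemma K_add:
  assumes v: "v \<in> Kc C" and w: "w \<in> Kc C"
  shows "v + w \<in> Kc C"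
proof (cases "v = 0 \<or> w = 0 \<or> v + w = 0")
  case True thus ?thesis using v w K_0 by auto
next
  case False
  hence nz: "v \<noteq> 0" "w \<noteq> 0" "v + w \<noteq> 0" by auto
  define p where "p = v /\<^sub>R norm v"
  define q where "q = w /\<^sub>R norm w"
  have pC: "p \<in> C" and qC: "q \<in> C" using v w nz unfolding p_def q_def Kc_def by auto
  have pn: "norm p = 1" and qn: "norm q = 1" unfolding p_def q_def using nz by auto
  have vp: "v = norm v *\<^sub>R p" and wq: "w = norm w *\<^sub>R q" unfolding p_def q_def using nz by auto
  show ?thesis
  proof (cases "p = q")
    case True
    have "v + w = (norm v + norm w) *\<^sub>R p" using vp wq True by (metis scaleR_add_left)
    thus ?thesis using K_scale[OF C_K[OF pC], of "norm v + norm w"] by simp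
  next
    case F1: False
    show ?thesis
    proof (cases "p = -q")
      case True
      have e: "v + w = (norm v - norm w) *\<^sub>R p" using vp wq True
        by (metis minus_minus scaleR_diff_left scaleR_minus_right diff_conv_add_uminus)
      show ?thesis
      proof (cases "norm v \<ge> norm w")
        case True thus ?thesis using e K_scale[OF C_K[OF pC], of "norm v - norm w"] by simp
      next
        case False
        have "v + w = (norm w - norm v) *\<^sub>R q" using e \<open>p = -q\<close> by (simp add: algebra_simps)
        thus ?thesis using False K_scale[OF C_K[OF qC], of "norm w - norm v"] by simp
      qed
    next
      case F2: False
      note B = arc_basic[OF pn qn F1 F2]
      have "sph_dist p q < pi" unfolding sph_dist_def using arccos_lt_bounded[OF B(1,2)] by simp
      hence segC: "sph_segment p q \<subseteq> C" using Ccv pC qC unfolding sph_convex_def by blast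
      have "(norm v *\<^sub>R p + norm w *\<^sub>R q) /\<^sub>R norm (norm v *\<^sub>R p + norm w *\<^sub>R q) \<in> sph_segment p q"
        using nz by (intro comb_in_segment[OF pn qn F1 F2]) auto
      hence "(v + w) /\<^sub>R norm (v + w) \<in> C" using segC vp wq by auto
      thus ?thesis using nz unfolding Kc_def by auto
    qed
  qed
qed

lemma K_normalize: "v \<in> Kc C \<Longrightarrow> v \<noteq> 0 \<Longrightarrow> v /\<^sub>R norm v \<in> C"
  unfolding Kc_def by auto

lemma K_sphere:
  assumes "v \<in> Kc C" "norm v = 1" shows "v \<in> C"
proof -
  have "v \<noteq> 0" using assms(2) by auto
  from K_normalize[OF assms(1) this] show ?thesis using assms(2) by simp
qed

lemma L1:
  assumes x: "norm x = 1" and e: "0 < e" "e \<le> 1" and g: "good C x e"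
  shows "ball x e \<subseteq> Kc C"
proof
  fix v assume "v \<in> ball x e"
  hence d: "norm (v - x) < e" by (simp add: dist_norm norm_minus_commute)
  have vnz: "v \<noteq> 0" using d x e by auto
  define c where "c = sqrt (1 - e\<^sup>2)"
  have c0: "0 \<le> c" unfolding c_def using e by (simp add: power_le_one)
  have cc: "c\<^sup>2 = 1 - e\<^sup>2" unfolding c_def using e by (simp add: power_le_one)
  have "(norm (v - x))\<^sup>2 = (v - x) \<bullet> (v - x)" by (rule power2_norm_eq_inner)
  also have "\<dots> = v \<bullet> v - 2 * (v \<bullet> x) + x \<bullet> x" by (simp add: inner_diff inner_commute)
  also have "\<dots> = (norm v)\<^sup>2 - 2 * (v \<bullet> x) + 1" using x by (simp add: dot_square_norm)
  finally have "(norm (v - x))\<^sup>2 = (norm v)\<^sup>2 - 2 * (v \<bullet> x) + 1" .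
  moreover have "(norm (v - x))\<^sup>2 < e\<^sup>2" using d by (simp add: power_strict_mono)
  ultimately have h1: "2 * (v \<bullet> x) > (norm v)\<^sup>2 + c\<^sup>2" using cc by linarith
  have "(norm v - c)\<^sup>2 \<ge> 0" by simp
  hence "(norm v)\<^sup>2 + c\<^sup>2 \<ge> 2 * c * norm v" by (simp add: power2_diff mult.commute mult.left_commute)
  hence "v \<bullet> x > c * norm v" using h1 by linarith
  moreover have nv: "norm v > 0" using vnz by simp
  ultimately have "c < (v \<bullet> x) / norm v" by (simp add: pos_less_divide_eq)
  moreover have "(v /\<^sub>R norm v) \<bullet> x = (v \<bullet> x) / norm v" by (simp add: divide_inverse_commute)
  ultimately have "(v /\<^sub>R norm v) \<bullet> x > c" by simp
  moreover have "v /\<^sub>R norm v \<in> sphere 0 1" using vnz by simp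
  ultimately have "v /\<^sub>R norm v \<in> C" using g unfolding good_def c_def by blast
  thus "v \<in> Kc C" using vnz unfolding Kc_def by auto
qed

lemma L2:
  assumes x: "norm x = 1" and e: "0 < e" "e \<le> 1" and b: "ball x e \<subseteq> Kc C"
  shows "good C x e"
  unfolding good_def
proof (intro ballI impI)
  fix w :: 'a assume w: "w \<in> sphere 0 1" and wx: "w \<bullet> x > sqrt (1 - e\<^sup>2)"
  define c where "c = sqrt (1 - e\<^sup>2)"
  have c0: "0 \<le> c" unfolding c_def using e by (simp add: power_le_one)
  have cc: "c\<^sup>2 = 1 - e\<^sup>2" unfolding c_def using e by (simp add: power_le_one)
  define l where "l = w \<bullet> x"
  have l0: "l > 0" using wx c0 unfolding l_def c_def by linarith
  have wn: "norm w = 1" using w by simp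
  have "(norm (l *\<^sub>R w - x))\<^sup>2 = (l *\<^sub>R w - x) \<bullet> (l *\<^sub>R w - x)"
    by (rule power2_norm_eq_inner)
  also have "\<dots> = l\<^sup>2 * (w \<bullet> w) - 2 * l * (w \<bullet> x) + x \<bullet> x"
    by (simp add: inner_diff inner_commute power2_eq_square algebra_simps)
  also have "\<dots> = 1 - l\<^sup>2" using wn x unfolding l_def by (simp add: dot_square_norm power2_eq_square)
  also have "\<dots> < 1 - c\<^sup>2"
  proof -
    have "c < l" using wx unfolding l_def c_def .
    hence "c\<^sup>2 < l\<^sup>2" using c0 by (simp add: power_strict_mono)
    thus ?thesis by simp
  qed
  also have "\<dots> = e\<^sup>2" using cc by simp
  finally have "norm (l *\<^sub>R w - x) < e" using e by (simp add: power_less_imp_less_base)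
  hence "l *\<^sub>R w \<in> Kc C" using b by (auto simp: dist_norm norm_minus_commute)
  moreover have "l *\<^sub>R w \<noteq> 0" using l0 wn by auto
  ultimately have "(l *\<^sub>R w) /\<^sub>R norm (l *\<^sub>R w) \<in> C" by (rule K_normalize)
  thus "w \<in> C" using l0 wn by simp
qed

lemma B_scale:
  assumes "ball x e \<subseteq> Kc C" "a > 0"
  shows "ball (a *\<^sub>R x) (a * e) \<subseteq> Kc C"
proof
  fix v assume v: "v \<in> ball (a *\<^sub>R x) (a * e)"
  have "v - a *\<^sub>R x = a *\<^sub>R (v /\<^sub>R a - x)" using assms(2) by (simp add: algebra_simps)
  hence "norm (v - a *\<^sub>R x) = a * norm (v /\<^sub>R a - x)" using assms(2) by simp
  moreover have "norm (v - a *\<^sub>R x) < a * e" using v by (simp add: dist_norm norm_minus_commute)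
  ultimately have "norm (v /\<^sub>R a - x) < e" using assms(2) by simp
  hence "v /\<^sub>R a \<in> ball x e" by (simp add: dist_norm norm_minus_commute)
  hence "v /\<^sub>R a \<in> Kc C" using assms(1) by blast
  from K_scale[OF this, of a] show "v \<in> Kc C" using assms(2) by simp
qed

lemma B_trans:
  assumes "ball x e \<subseteq> Kc C" "y \<in> Kc C"
  shows "ball (x + y) e \<subseteq> Kc C"
proof
  fix v assume "v \<in> ball (x + y) e"
  hence "v - y \<in> ball x e" by (simp add: dist_norm algebra_simps)
  hence "v - y \<in> Kc C" using assms(1) by blast
  from K_add[OF this assms(2)] show "v \<in> Kc C" by simp
qed

lemma B_mid:
  assumes "ball x e \<subseteq> Kc C" "ball y e \<subseteq> Kc C"
  shows "ball ((1/2) *\<^sub>R (x + y)) e \<subseteq> Kc C"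
proof
  fix v assume "v \<in> ball ((1/2) *\<^sub>R (x + y)) e"
  define d where "d = v - (1/2) *\<^sub>R (x + y)"
  have nd: "norm d < e" using \<open>v \<in> _\<close> unfolding d_def by (simp add: dist_norm norm_minus_commute)
  have "x + d \<in> ball x e" using nd by (simp add: dist_norm)
  hence a: "x + d \<in> Kc C" using assms(1) by blast
  have "y + d \<in> ball y e" using nd by (simp add: dist_norm)
  hence b: "y + d \<in> Kc C" using assms(2) by blast
  have s1: "(x + d) + (y + d) = (x + y) + 2 *\<^sub>R d" by (simp add: algebra_simps scaleR_2)
  have s2: "2 *\<^sub>R d = 2 *\<^sub>R v - (x + y)" unfolding d_def by (simp add: scaleR_diff_right)
  have "v = (1/2) *\<^sub>R ((x + d) + (y + d))" unfolding s1 s2 by simp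
  thus "v \<in> Kc C" using K_scale[OF K_add[OF a b], of "1/2"] by simp
qed

lemma Z:
  assumes b: "ball v e \<subseteq> Kc C" and n: "norm v < e"
  shows False
proof -
  have "sphere 0 1 \<subseteq> C"
  proof
    fix w :: 'a assume w: "w \<in> sphere 0 1"
    define r where "r = (e - norm v) / 2"
    have r0: "r > 0" unfolding r_def using n by simp
    have "dist v (r *\<^sub>R w) \<le> norm v + r" using w r0
      by (simp add: dist_norm) (metis norm_scaleR abs_of_pos mult.right_neutral norm_triangle_ineq4)
    also have "\<dots> < e" unfolding r_def using n by (simp add: field_simps)
    finally have "r *\<^sub>R w \<in> Kc C" using b by auto
    from K_scale[OF this, of "1/r"] have "w \<in> Kc C" using r0 by simp
    thus "w \<in> C" using K_sphere w by simp
  qed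
  thus False using CS CneS by blast
qed



lemma norm_comb2:
  fixes x y :: 'a
  assumes "norm x = 1" "norm y = 1"
  shows "(norm (a *\<^sub>R x + b *\<^sub>R y))\<^sup>2 = a\<^sup>2 + 2 * a * b * (x \<bullet> y) + b\<^sup>2"
proof -
  have "(norm (a *\<^sub>R x + b *\<^sub>R y))\<^sup>2 = (a *\<^sub>R x + b *\<^sub>R y) \<bullet> (a *\<^sub>R x + b *\<^sub>R y)"
    by (rule power2_norm_eq_inner)
  also have "\<dots> = a\<^sup>2 * (x \<bullet> x) + 2 * a * b * (x \<bullet> y) + b\<^sup>2 * (y \<bullet> y)"
    by (simp add: inner_add inner_commute power2_eq_square algebra_simps)
  also have "\<dots> = a\<^sup>2 + 2 * a * b * (x \<bullet> y) + b\<^sup>2" using assms by (simp add: dot_square_norm)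
  finally show ?thesis .
qed

lemma sq_lt1: "0 \<le> (r::real) \<Longrightarrow> r\<^sup>2 < 1 \<Longrightarrow> r < 1"
  by (metis abs_of_nonneg abs_square_less_1)

lemma delta_pos_exists: "\<exists>z\<in>C. infdist z F > 0"
proof -
  obtain z where z: "z \<in> sph_top interior_of C" using Cint by blast
  have "openin sph_top (sph_top interior_of C)" by (rule openin_interior_of)
  then obtain T where T0: "openin euclidean T" and T: "sph_top interior_of C = T \<inter> sphere 0 1"
    unfolding openin_subtopology by blast
  have oT: "open T" by (subst open_openin) (rule T0)
  have zT: "z \<in> T" using T z by blast
  obtain \<epsilon> where \<epsilon>: "\<epsilon> > 0" "ball z \<epsilon> \<subseteq> T" using oT zT open_contains_ball by blast
  have IC: "sph_top interior_of C \<subseteq> C" by (rule interior_of_subset)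
  have zS: "z \<in> sphere 0 1" using T z by blast
  have zC: "z \<in> C" using z IC by blast
  have "\<epsilon> \<le> infdist z F"
  proof (rule Q2)
    show "norm z = 1" using zS by simp
    fix w :: 'a assume w: "w \<in> sphere 0 1" "norm (w - z) < \<epsilon>"
    have "w \<in> ball z \<epsilon>" using w(2) by (simp add: dist_norm norm_minus_commute)
    hence "w \<in> T" using \<epsilon>(2) by blast
    hence "w \<in> sph_top interior_of C" using T w(1) by blast
    thus "w \<in> C" using IC by blast
  qed
  hence "infdist z F > 0" using \<epsilon>(1) by linarith
  thus ?thesis using zC by blast
qed

lemma max_exists: "\<exists>x0\<in>C. \<forall>x\<in>C. infdist x F \<le> infdist x0 F"
  by (rule continuous_attains_sup[OF C_compact C_ne continuous_on_infdist[OF continuous_on_id]])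

lemma hemi:
  assumes x: "x \<in> C"
  shows "infdist x F \<le> sqrt 2"
proof (rule ccontr)
  assume na: "\<not> infdist x F \<le> sqrt 2"
  define d where "d = infdist x F"
  have xn: "norm x = 1" using x CS by auto
  have d2: "d > sqrt 2" using na unfolding d_def by simp
  have dle: "d \<le> 2" unfolding d_def using delta_le2[OF xn] .
  have dd: "d\<^sup>2 > 2"
  proof -
    have "(sqrt 2)\<^sup>2 < d\<^sup>2" using d2 by (intro power_strict_mono) auto
    thus ?thesis by simp
  qed
  have d0: "d \<ge> 0" unfolding d_def by (rule infdist_nonneg)
  have Q1': "w \<in> C" if w: "w \<in> sphere 0 1" and wl: "(norm (w - x))\<^sup>2 < d\<^sup>2" for w
  proof -
    have "norm (w - x) < d" using wl d0 by (rule power_less_imp_less_base)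
    thus ?thesis using Q1[OF x w] unfolding d_def by blast
  qed
  have "good C x 1" unfolding good_def
  proof (intro ballI impI)
    fix w :: 'a assume w: "w \<in> sphere 0 1" and "w \<bullet> x > sqrt (1 - 1\<^sup>2)"
    hence "w \<bullet> x > 0" by simp
    hence "(norm (w - x))\<^sup>2 < d\<^sup>2" using unit_inner_dist[of x w] xn w dd by simp
    thus "w \<in> C" using Q1' w by blast
  qed
  hence bK: "ball x 1 \<subseteq> Kc C" using L1[OF xn] by simp
  define b where "b = (1 - d\<^sup>2 / 2) / 2"
  have mx: "-x \<in> sphere 0 1" and px: "x \<in> sphere 0 1" using xn by auto
  have ivt1: "inner x (-x) \<le> b" and ivt2: "b \<le> inner x x"
  proof -
    have "d\<^sup>2 \<le> 2\<^sup>2" using dle d0 by (intro power_mono) auto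
    hence "d\<^sup>2 \<le> 4" by simp
    moreover have "x \<bullet> x = 1" using xn by (simp add: dot_square_norm)
    moreover have "0 \<le> d\<^sup>2" by simp
    ultimately show "inner x (-x) \<le> b" unfolding b_def inner_minus_right by (simp add: field_simps)
    show "b \<le> inner x x" unfolding b_def using \<open>x \<bullet> x = 1\<close> by (simp add: field_simps)
  qed
  obtain w where w: "w \<in> sphere 0 1" "inner x w = b"
    using connected_ivt_hyperplane[OF connected_sphere[OF dim, of 0 1] mx px ivt1 ivt2] by blast
  have b0: "b < 0" unfolding b_def using dd by simp
  have wn: "norm w = 1" using w by simp
  have "(norm (w - x))\<^sup>2 < d\<^sup>2" using unit_inner_dist[OF xn wn] w(2) dd unfolding b_def
    by (simp add: inner_commute)
  hence wC: "w \<in> C" using Q1' w by blast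
  define t where "t = - b / 2"
  have t0: "t > 0" unfolding t_def using b0 by simp
  have "ball (x + t *\<^sub>R w) 1 \<subseteq> Kc C" using B_trans[OF bK K_scale[OF C_K[OF wC]]] t0 by simp
  moreover have "norm (x + t *\<^sub>R w) < 1"
  proof (rule sq_lt1)
    have "(norm (1 *\<^sub>R x + t *\<^sub>R w))\<^sup>2 = 1 + 2 * t * b + t\<^sup>2"
      using norm_comb2[OF xn wn, of 1 t] w(2) by simp
    also have "\<dots> = 1 - 3 * b\<^sup>2 / 4" unfolding t_def by (simp add: power2_eq_square field_simps)
    also have "\<dots> < 1" using b0 by simp
    finally show "(norm (x + t *\<^sub>R w))\<^sup>2 < 1" by simp
  qed simp
  ultimately show False by (rule Z)
qed


lemma max_ball:
  assumes x0: "x0 \<in> C" and mx: "\<forall>x\<in>C. infdist x F \<le> infdist x0 F"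
  defines "d0 \<equiv> infdist x0 F"
  defines "c0 \<equiv> 1 - d0\<^sup>2 / 2"
  defines "e0 \<equiv> sqrt (1 - c0\<^sup>2)"
  shows "0 < d0" "d0\<^sup>2 \<le> 2" "0 \<le> c0" "c0 < 1" "0 < e0" "e0 \<le> 1" "sqrt (1 - e0\<^sup>2) = c0"
    "ball x0 e0 \<subseteq> Kc C"
proof -
  obtain z where z: "z \<in> C" "infdist z F > 0" using delta_pos_exists by blast
  show d0p: "0 < d0" unfolding d0_def using z mx by force
  have "d0 \<le> sqrt 2" unfolding d0_def using hemi[OF x0] .
  hence "d0\<^sup>2 \<le> (sqrt 2)\<^sup>2" using d0p by (intro power_mono) auto
  thus d02: "d0\<^sup>2 \<le> 2" by simp
  show c00: "0 \<le> c0" unfolding c0_def using d02 by simp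
  have "0 < d0\<^sup>2" using d0p by simp
  thus c01: "c0 < 1" unfolding c0_def by simp
  have "c0\<^sup>2 < 1" using c00 c01 by (simp add: power_less_one_iff)
  hence ep: "0 < 1 - c0\<^sup>2" by simp
  thus e0p: "0 < e0" unfolding e0_def by simp
  show e01: "e0 \<le> 1" unfolding e0_def using c00 by simp
  have "e0\<^sup>2 = 1 - c0\<^sup>2" unfolding e0_def using ep by simp
  hence "1 - e0\<^sup>2 = c0\<^sup>2" by simp
  thus sq: "sqrt (1 - e0\<^sup>2) = c0" using c00 by simp
  have xn: "norm x0 = 1" using x0 CS by auto
  have d00: "0 \<le> d0" using d0p by simp
  have "good C x0 e0" unfolding good_def
  proof (intro ballI impI)
    fix w :: 'a assume w: "w \<in> sphere 0 1" and wx: "w \<bullet> x0 > sqrt (1 - e0\<^sup>2)"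
    have wn: "norm w = 1" using w by simp
    have "(norm (w - x0))\<^sup>2 = 2 - 2 * (w \<bullet> x0)" by (rule unit_inner_dist[OF xn wn])
    also have "\<dots> < 2 - 2 * c0" using wx sq by simp
    also have "\<dots> = d0\<^sup>2" unfolding c0_def by simp
    finally have "norm (w - x0) < d0" using d00 by (rule power_less_imp_less_base)
    thus "w \<in> C" using Q1[OF x0 w] unfolding d0_def by blast
  qed
  thus "ball x0 e0 \<subseteq> Kc C" using L1[OF xn e0p e01] by blast
qed

lemma improve:
  assumes x0: "x0 \<in> C" and mx: "\<forall>x\<in>C. infdist x F \<le> infdist x0 F"
  defines "d0 \<equiv> infdist x0 F"
  defines "c0 \<equiv> 1 - d0\<^sup>2 / 2"
  defines "e0 \<equiv> sqrt (1 - c0\<^sup>2)"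
  assumes bv: "ball v e0 \<subseteq> Kc C" and v0: "0 < norm v" and v1: "norm v < 1"
  shows False
proof (cases "norm v < e0")
  case True thus False using Z[OF bv] by blast
next
  case False
  note M = max_ball[OF x0 mx, folded d0_def, folded c0_def, folded e0_def]
  define a where "a = 1 / norm v"
  have a0: "a > 0" unfolding a_def using v0 by simp
  define x' where "x' = a *\<^sub>R v"
  define e' where "e' = a * e0"
  have bx: "ball x' e' \<subseteq> Kc C" unfolding x'_def e'_def by (rule B_scale[OF bv a0])
  have xn: "norm x' = 1" unfolding x'_def a_def using v0 by simp
  have e'gt: "e0 < e'" unfolding e'_def a_def using M(5) v0 v1 by (simp add: field_simps)
  have e'le: "e' \<le> 1" unfolding e'_def a_def using False v0 by (simp add: field_simps)
  have e'p: "0 < e'" using e'gt M(5) by linarith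
  have g: "good C x' e'" by (rule L2[OF xn e'p e'le bx])
  define c' where "c' = sqrt (1 - e'\<^sup>2)"
  have "e0\<^sup>2 < e'\<^sup>2" using e'gt M(5) by (intro power_strict_mono) auto
  hence "1 - e'\<^sup>2 < 1 - e0\<^sup>2" by simp
  hence "sqrt (1 - e'\<^sup>2) < sqrt (1 - e0\<^sup>2)" by (rule real_sqrt_less_mono)
  hence c'lt: "c' < c0" unfolding c'_def using M(7) by simp
  have "e'\<^sup>2 \<le> 1" using e'le e'p by (simp add: power_le_one)
  hence c'0: "0 \<le> c'" unfolding c'_def by simp
  have c'1: "c' \<le> 1" unfolding c'_def using e'p by simp
  have "x' \<in> ball x' e'" using e'p by simp
  hence x'C: "x' \<in> C" using bx K_sphere xn by blast
  define s' where "s' = sqrt (2 - 2 * c')"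
  have ss: "s'\<^sup>2 = 2 - 2 * c'" unfolding s'_def using c'1 by simp
  have s0: "0 \<le> s'" unfolding s'_def using c'1 by simp
  have "s' \<le> infdist x' F"
  proof (rule Q2[OF xn])
    fix w :: 'a assume w: "w \<in> sphere 0 1" and wl: "norm (w - x') < s'"
    have wn: "norm w = 1" using w by simp
    have "(norm (w - x'))\<^sup>2 < s'\<^sup>2" using wl by (intro power_strict_mono) auto
    hence "2 - 2 * (w \<bullet> x') < 2 - 2 * c'" using unit_inner_dist[OF xn wn] ss by simp
    hence "w \<bullet> x' > c'" by simp
    thus "w \<in> C" using g w unfolding good_def c'_def by blast
  qed
  also have "\<dots> \<le> d0" unfolding d0_def using mx x'C by blast
  finally have "s' \<le> d0" .
  moreover have "d0\<^sup>2 < s'\<^sup>2" using ss c'lt unfolding c0_def by simp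
  moreover have "s'\<^sup>2 \<le> d0\<^sup>2" using \<open>s' \<le> d0\<close> s0 by (rule power_mono)
  ultimately show False by linarith
qed

lemma part3:
  assumes x0: "x0 \<in> C" and mx: "\<forall>x\<in>C. infdist x F \<le> infdist x0 F" and y: "y \<in> C"
  shows "0 \<le> y \<bullet> x0"
proof (rule ccontr)
  assume "\<not> 0 \<le> y \<bullet> x0"
  define b where "b = y \<bullet> x0"
  have b0: "b < 0" unfolding b_def using \<open>\<not> 0 \<le> y \<bullet> x0\<close> by simp
  have xn: "norm x0 = 1" using x0 CS by auto
  have yn: "norm y = 1" using y CS by auto
  have "\<bar>b\<bar> \<le> 1" unfolding b_def by (rule unit_inner_le1[OF xn yn])
  hence bb: "b\<^sup>2 \<le> 1" by (simp add: abs_square_le_1)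
  define t where "t = - b / 2"
  have t0: "t > 0" unfolding t_def using b0 by simp
  note M = max_ball[OF x0 mx]
  have bK: "ball (x0 + t *\<^sub>R y) (sqrt (1 - (1 - (infdist x0 F)\<^sup>2 / 2)\<^sup>2)) \<subseteq> Kc C"
    using B_trans[OF M(8) K_scale[OF C_K[OF y]]] t0 by simp
  have "(norm (1 *\<^sub>R x0 + t *\<^sub>R y))\<^sup>2 = 1 + 2 * t * b + t\<^sup>2"
    using norm_comb2[OF xn yn, of 1 t] unfolding b_def by (simp add: inner_commute)
  also have "\<dots> = 1 - 3 * b\<^sup>2 / 4" unfolding t_def by (simp add: power2_eq_square field_simps)
  finally have nv: "(norm (x0 + t *\<^sub>R y))\<^sup>2 = 1 - 3 * b\<^sup>2 / 4" by simp
  have "0 < b\<^sup>2" using b0 by simp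
  hence "(norm (x0 + t *\<^sub>R y))\<^sup>2 < 1" using nv by simp
  hence n1: "norm (x0 + t *\<^sub>R y) < 1" by (rule sq_lt1[rotated]) auto
  have "0 < (norm (x0 + t *\<^sub>R y))\<^sup>2" using nv bb by simp
  hence n0: "0 < norm (x0 + t *\<^sub>R y)" by simp
  show False by (rule improve[OF x0 mx bK n0 n1])
qed

lemma uniq:
  assumes x0: "x0 \<in> C" and mx: "\<forall>x\<in>C. infdist x F \<le> infdist x0 F"
    and x1: "x1 \<in> C" and eq: "infdist x1 F = infdist x0 F"
  shows "x1 = x0"
proof (rule ccontr)
  assume ne: "x1 \<noteq> x0"
  have mx1: "\<forall>x\<in>C. infdist x F \<le> infdist x1 F" using mx eq by simp
  have xn: "norm x0 = 1" using x0 CS by auto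
  have yn: "norm x1 = 1" using x1 CS by auto
  define c where "c = x0 \<bullet> x1"
  have c0: "0 \<le> c" unfolding c_def using part3[OF x1 mx1 x0] .
  have "c \<le> 1" unfolding c_def using unit_inner_le1[OF yn xn] by simp
  moreover have "c \<noteq> 1" unfolding c_def using unit_inner_eq1[OF yn xn] ne by (metis inner_commute)
  ultimately have c1: "c < 1" by simp
  note M0 = max_ball[OF x0 mx]
  note M1 = max_ball[OF x1 mx1, unfolded eq]
  have bK: "ball ((1/2) *\<^sub>R (x0 + x1)) (sqrt (1 - (1 - (infdist x0 F)\<^sup>2 / 2)\<^sup>2)) \<subseteq> Kc C"
    by (rule B_mid[OF M0(8) M1(8)])
  have "(norm ((1/2) *\<^sub>R x0 + (1/2) *\<^sub>R x1))\<^sup>2 = 1/4 + 2 * (1/2) * (1/2) * c + 1/4"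
    using norm_comb2[OF xn yn, of "1/2" "1/2"] unfolding c_def by (simp add: power2_eq_square)
  hence nv: "(norm ((1/2) *\<^sub>R (x0 + x1)))\<^sup>2 = (1 + c) / 2" by (simp add: scaleR_add_right field_simps)
  have "(norm ((1/2) *\<^sub>R (x0 + x1)))\<^sup>2 < 1" using nv c1 by simp
  hence n1: "norm ((1/2) *\<^sub>R (x0 + x1)) < 1" by (rule sq_lt1[rotated]) auto
  have "0 < (norm ((1/2) *\<^sub>R (x0 + x1)))\<^sup>2" unfolding nv using c0 by simp
  hence n0: "0 < norm ((1/2) *\<^sub>R (x0 + x1))" by simp
  show False by (rule improve[OF x0 mx bK n0 n1])
qed


lemma h_mono:
  fixes a b :: real
  assumes "0 \<le> a" "a \<le> b" "b \<le> 2"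
  shows "arccos (1 - a\<^sup>2 / 2) \<le> arccos (1 - b\<^sup>2 / 2)"
proof -
  have "a\<^sup>2 \<le> b\<^sup>2" using assms by (intro power_mono) auto
  moreover have "b\<^sup>2 \<le> 2\<^sup>2" using assms by (intro power_mono) auto
  moreover have "0 \<le> a\<^sup>2" by simp
  ultimately show ?thesis by (intro arccos_le_arccos) auto
qed

lemma h_strict:
  fixes a b :: real
  assumes "0 \<le> a" "a < b" "b \<le> 2"
  shows "arccos (1 - a\<^sup>2 / 2) < arccos (1 - b\<^sup>2 / 2)"
proof -
  have "a\<^sup>2 < b\<^sup>2" using assms by (intro power_strict_mono) auto
  moreover have "b\<^sup>2 \<le> 2\<^sup>2" using assms by (intro power_mono) auto
  moreover have "0 \<le> a\<^sup>2" by simp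
  ultimately show ?thesis by (intro arccos_less_arccos) auto
qed

lemma rho_eq:
  assumes xn: "norm x = 1"
  shows "sph_setdist x F = arccos (1 - (infdist x F)\<^sup>2 / 2)"
proof -
  obtain z0 where z0: "z0 \<in> F" "infdist x F = dist x z0"
    using infdist_attains_inf[OF F_closed F_ne] by metis
  have key: "x \<bullet> z = 1 - (dist x z)\<^sup>2 / 2" if z: "z \<in> F" for z
  proof -
    have zn: "norm z = 1" using z F_sph by auto
    have "(norm (z - x))\<^sup>2 = 2 - 2 * (z \<bullet> x)" by (rule unit_inner_dist[OF xn zn])
    hence "(dist x z)\<^sup>2 = 2 - 2 * (x \<bullet> z)" by (simp add: dist_norm norm_minus_commute inner_commute)
    thus ?thesis by linarith
  qed
  have le1: "\<bar>x \<bullet> z\<bar> \<le> 1" if z: "z \<in> F" for z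
  proof -
    have zn: "norm z = 1" using z F_sph by auto
    show ?thesis using unit_inner_le1[OF zn xn] by simp
  qed
  have d0: "0 \<le> infdist x F" by (rule infdist_nonneg)
  show ?thesis unfolding sph_setdist_def
  proof (rule cInf_eq_minimum)
    show "arccos (1 - (infdist x F)\<^sup>2 / 2) \<in> sph_dist x ` F"
      unfolding sph_dist_def z0(2) key[OF z0(1), symmetric] using z0(1) by (rule imageI)
  next
    fix y assume "y \<in> sph_dist x ` F"
    then obtain z where z: "z \<in> F" "y = arccos (x \<bullet> z)" unfolding sph_dist_def by blast
    have "infdist x F \<le> dist x z" by (rule infdist_le[OF z(1)])
    hence "(infdist x F)\<^sup>2 \<le> (dist x z)\<^sup>2" using d0 by (intro power_mono) auto
    hence "x \<bullet> z \<le> 1 - (infdist x F)\<^sup>2 / 2" using key[OF z(1)] by simp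
    moreover have "-1 \<le> x \<bullet> z" using le1[OF z(1)] by simp
    moreover have "1 - (infdist x F)\<^sup>2 / 2 \<le> 1" by simp
    ultimately show "arccos (1 - (infdist x F)\<^sup>2 / 2) \<le> y" unfolding z(2)
      by (intro arccos_le_arccos) auto
  qed
qed

lemma main:
  "\<exists>x0\<in>C.
     sph_setdist x0 F = (SUP x\<in>C. sph_setdist x F)
   \<and> (\<forall>x1\<in>C. sph_setdist x1 F = (SUP x\<in>C. sph_setdist x F) \<longrightarrow> x1 = x0)
   \<and> (\<forall>y\<in>C. sph_dist y x0 \<le> pi / 2)"
proof -
  obtain x0 where x0: "x0 \<in> C" and mx: "\<forall>x\<in>C. infdist x F \<le> infdist x0 F"
    using max_exists by blast
  have nC: "norm x = 1" if "x \<in> C" for x using that CS by auto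
  have le: "sph_setdist x F \<le> sph_setdist x0 F" if x: "x \<in> C" for x
    unfolding rho_eq[OF nC[OF x]] rho_eq[OF nC[OF x0]]
    using mx x infdist_nonneg delta_le2[OF nC[OF x0]] by (intro h_mono) auto
  have sup: "(SUP x\<in>C. sph_setdist x F) = sph_setdist x0 F"
    using x0 le by (intro cSup_eq_maximum) auto
  show ?thesis
  proof (intro bexI[OF _ x0] conjI ballI impI)
    show "sph_setdist x0 F = (SUP x\<in>C. sph_setdist x F)" using sup by simp
  next
    fix x1 assume x1: "x1 \<in> C" and e: "sph_setdist x1 F = (SUP x\<in>C. sph_setdist x F)"
    have "infdist x1 F = infdist x0 F"
    proof (rule ccontr)
      assume "infdist x1 F \<noteq> infdist x0 F"
      hence "infdist x1 F < infdist x0 F" using mx x1 by force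
      hence "sph_setdist x1 F < sph_setdist x0 F"
        unfolding rho_eq[OF nC[OF x1]] rho_eq[OF nC[OF x0]]
        using infdist_nonneg delta_le2[OF nC[OF x0]] by (intro h_strict) auto
      thus False using e sup by simp
    qed
    thus "x1 = x0" by (rule uniq[OF x0 mx x1])
  next
    fix y assume y: "y \<in> C"
    have "0 \<le> y \<bullet> x0" by (rule part3[OF x0 mx y])
    moreover have "\<bar>y \<bullet> x0\<bar> \<le> 1" using unit_inner_le1[OF nC[OF x0] nC[OF y]] by (simp add: inner_commute)
    ultimately have "arccos (y \<bullet> x0) \<le> arccos 0" by (intro arccos_le_arccos) auto
    thus "sph_dist y x0 \<le> pi / 2" unfolding sph_dist_def by simp
  qed
qed

end


theorem corollary2p7:
  fixes C :: "'a::euclidean_space set"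
  assumes "DIM('a) \<ge> 2"
    and "C \<subseteq> sphere 0 1" and "C \<noteq> sphere 0 1"
    and "closedin sph_top C"
    and "sph_convex C"
    and "sph_top interior_of C \<noteq> {}"
  shows "\<exists>x0\<in>C.
           sph_setdist x0 (sph_top frontier_of C) = (SUP x\<in>C. sph_setdist x (sph_top frontier_of C))
         \<and> (\<forall>x1\<in>C. sph_setdist x1 (sph_top frontier_of C) = (SUP x\<in>C. sph_setdist x (sph_top frontier_of C))
                   \<longrightarrow> x1 = x0)
         \<and> (\<forall>y\<in>C. sph_dist y x0 \<le> pi / 2)"
  by (rule main[OF assms])

end
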